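(* Every sawed tree $F$ admits a plane drawing $d=(d_1,d_2)$ with $d_2(x)=\mathrm{height}(x)$ for every $x\in F$.
   Context: A finite tree is a finite rooted poset in which each $\downarrow x$ is a chain; $\mathrm{Top}(T)$ is its set of maximal elements and $\mathrm{height}(x)$ is the maximum of $|C|-1$ over chains $C\subseteq\downarrow x$. Let $T$ be a finite tree of height $>0$ all of whose top elements have the same height, with a plane ordering $\prec$ of $\mathrm{Top}(T)$ (a linear order such that each $\uparrow x\cap\mathrm{Top}(T)$ is a $\prec$-interval); enumerate $\mathrm{Top}(T)=\{t_1\prec\cdots\prec t_k\}$. The sawed tree based on $(T,\prec)$ is the poset obtained from $T$ by adding new elements $s_1,\dots,s_{k-1}$ with $t_i<s_i$ and $t_{i+1}<s_i$ for each $i$ (and the relations forced by transitivity). A plane drawing of a poset $G$ is an injection $d=(d_1,d_2)\colon G\to\mathbb R^2$ such that, drawing a straight edge from $d(x)$ to $d(y)$ whenever $y$ is an immediate successor of $x$, $x<y$ implies $d_2(x)<d_2(y)$ and distinct edges meet only at common endpoints. *)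

theory Defs
  imports "HOL-Analysis.Analysis"
begin

definition partial_order_on' :: "'a set \<Rightarrow> ('a \<Rightarrow> 'a \<Rightarrow> bool) \<Rightarrow> bool" where
  "partial_order_on' S le \<longleftrightarrow>
     (\<forall>x\<in>S. le x x) \<and>
     (\<forall>x\<in>S. \<forall>y\<in>S. le x y \<and> le y x \<longrightarrow> x = y) \<and>
     (\<forall>x\<in>S. \<forall>y\<in>S. \<forall>z\<in>S. le x y \<and> le y z \<longrightarrow> le x z)"

definition is_chain :: "('a \<Rightarrow> 'a \<Rightarrow> bool) \<Rightarrow> 'a set \<Rightarrow> bool" where
  "is_chain le C \<longleftrightarrow> (\<forall>a\<in>C. \<forall>b\<in>C. le a b \<or> le b a)"

definition down_set :: "'a set \<Rightarrow> ('a \<Rightarrow> 'a \<Rightarrow> bool) \<Rightarrow> 'a \<Rightarrow> 'a set" where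
  "down_set S le x = {y\<in>S. le y x}"

definition up_set :: "'a set \<Rightarrow> ('a \<Rightarrow> 'a \<Rightarrow> bool) \<Rightarrow> 'a \<Rightarrow> 'a set" where
  "up_set S le x = {y\<in>S. le x y}"

definition finite_tree :: "'a set \<Rightarrow> ('a \<Rightarrow> 'a \<Rightarrow> bool) \<Rightarrow> bool" where
  "finite_tree T le \<longleftrightarrow> finite T \<and> partial_order_on' T le \<and>
     (\<exists>r\<in>T. \<forall>x\<in>T. le r x) \<and>
     (\<forall>x\<in>T. is_chain le (down_set T le x))"

definition Top :: "'a set \<Rightarrow> ('a \<Rightarrow> 'a \<Rightarrow> bool) \<Rightarrow> 'a set" where
  "Top S le = {x\<in>S. \<forall>y\<in>S. le x y \<longrightarrow> y = x}"

definition height :: "'a set \<Rightarrow> ('a \<Rightarrow> 'a \<Rightarrow> bool) \<Rightarrow> 'a \<Rightarrow> nat" where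
  "height S le x = Max {card C - 1 | C. C \<subseteq> down_set S le x \<and> is_chain le C}"

text \<open>Plane ordering of Top(T), given as its enumeration ts = [t_1, ..., t_k]
(a linear order on Top T) such that each up-set meets Top T in an interval.\<close>
definition plane_ordering :: "'a set \<Rightarrow> ('a \<Rightarrow> 'a \<Rightarrow> bool) \<Rightarrow> 'a list \<Rightarrow> bool" where
  "plane_ordering T le ts \<longleftrightarrow> distinct ts \<and> set ts = Top T le \<and>
     (\<forall>x\<in>T. \<forall>i j l. i \<le> j \<and> j \<le> l \<and> l < length ts \<and>
        ts ! i \<in> up_set T le x \<and> ts ! l \<in> up_set T le x \<longrightarrow> ts ! j \<in> up_set T le x)"

text \<open>The sawed tree on 'a + nat: Inl x for x in T, Inr i (i < k - 1) for the new
element s_{i+1}, lying above t_{i+1} = ts!i and t_{i+2} = ts!(i+1) (0-based lists).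
The order is the one generated by T and these relations (transitive closure written out).\<close>
definition sawed_carrier :: "'a set \<Rightarrow> 'a list \<Rightarrow> ('a + nat) set" where
  "sawed_carrier T ts = Inl ` T \<union> Inr ` {..<length ts - 1}"

fun sawed_le :: "('a \<Rightarrow> 'a \<Rightarrow> bool) \<Rightarrow> 'a list \<Rightarrow> 'a + nat \<Rightarrow> 'a + nat \<Rightarrow> bool" where
  "sawed_le le ts (Inl x) (Inl y) = le x y"
| "sawed_le le ts (Inl x) (Inr i) = (le x (ts ! i) \<or> le x (ts ! Suc i))"
| "sawed_le le ts (Inr i) (Inl y) = False"
| "sawed_le le ts (Inr i) (Inr j) = (i = j)"

definition is_sawed_tree_basis :: "'a set \<Rightarrow> ('a \<Rightarrow> 'a \<Rightarrow> bool) \<Rightarrow> 'a list \<Rightarrow> bool" where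
  "is_sawed_tree_basis T le ts \<longleftrightarrow> finite_tree T le \<and>
     (\<exists>x\<in>T. height T le x > 0) \<and>
     (\<forall>t\<in>Top T le. \<forall>t'\<in>Top T le. height T le t = height T le t') \<and>
     plane_ordering T le ts"

definition covers :: "'b set \<Rightarrow> ('b \<Rightarrow> 'b \<Rightarrow> bool) \<Rightarrow> 'b \<Rightarrow> 'b \<Rightarrow> bool" where
  "covers G le x y \<longleftrightarrow> x \<in> G \<and> y \<in> G \<and> le x y \<and> x \<noteq> y \<and>
     \<not> (\<exists>z\<in>G. le x z \<and> x \<noteq> z \<and> le z y \<and> z \<noteq> y)"

definition plane_drawing :: "'b set \<Rightarrow> ('b \<Rightarrow> 'b \<Rightarrow> bool) \<Rightarrow> ('b \<Rightarrow> real \<times> real) \<Rightarrow> bool" where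
  "plane_drawing G le d \<longleftrightarrow> inj_on d G \<and>
     (\<forall>x\<in>G. \<forall>y\<in>G. le x y \<and> x \<noteq> y \<longrightarrow> snd (d x) < snd (d y)) \<and>
     (\<forall>x y u v. covers G le x y \<and> covers G le u v \<and> (x, y) \<noteq> (u, v) \<longrightarrow>
        closed_segment (d x) (d y) \<inter> closed_segment (d u) (d v) \<subseteq> {d x, d y} \<inter> {d u, d v})"

end

theory Submission
  imports Defs
begin


lemma po_refl: "partial_order_on' S le \<Longrightarrow> \<forall>x\<in>S. le x x"
  unfolding partial_order_on'_def by (elim conjE) assumption
lemma po_anti: "partial_order_on' S le \<Longrightarrow> \<forall>x\<in>S. \<forall>y\<in>S. le x y \<and> le y x \<longrightarrow> x = y"
  unfolding partial_order_on'_def by (elim conjE) assumption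
lemma po_trans: "partial_order_on' S le \<Longrightarrow> \<forall>x\<in>S. \<forall>y\<in>S. \<forall>z\<in>S. le x y \<and> le y z \<longrightarrow> le x z"
  unfolding partial_order_on'_def by (elim conjE) assumption
lemmas po_parts = po_refl po_anti po_trans

lemma height_finite:
  assumes "finite S"
  shows "finite {card C - 1 | C. C \<subseteq> down_set S le x \<and> is_chain le C}"
proof -
  have "{card C - 1 | C. C \<subseteq> down_set S le x \<and> is_chain le C} \<subseteq> (\<lambda>C. card C - 1) ` Pow (down_set S le x)" by auto
  moreover have "finite (Pow (down_set S le x))" using assms by (simp add: down_set_def)
  ultimately show ?thesis by (meson finite_surj)
qed

lemma height_ge:
  assumes "finite S" "C \<subseteq> down_set S le x" "is_chain le C"
  shows "card C - 1 \<le> height S le x"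
  unfolding height_def using height_finite[OF assms(1)] assms(2,3) by (auto intro!: Max_ge)

lemma height_le:
  assumes "finite S" "\<And>C. C \<subseteq> down_set S le x \<Longrightarrow> is_chain le C \<Longrightarrow> card C - 1 \<le> N"
  shows "height S le x \<le> N"
  unfolding height_def using height_finite[OF assms(1)] assms(2)
  by (subst Max_le_iff) (auto intro: exI[of _ "{}"] simp: is_chain_def)

lemma height_attained:
  assumes "finite S"
  obtains C where "C \<subseteq> down_set S le x" "is_chain le C" "height S le x = card C - 1"
proof -
  have ne: "{card C - 1 | C. C \<subseteq> down_set S le x \<and> is_chain le C} \<noteq> {}"
    by (auto intro: exI[of _ "{}"] simp: is_chain_def)
  from Max_in[OF height_finite[OF assms] ne] show ?thesis using that unfolding height_def by auto
qed

lemma height_mono: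
  assumes "finite S" "partial_order_on' S le" "x \<in> S" "y \<in> S" "le x y" "x \<noteq> y"
  shows "height S le x < height S le y"
proof -
  obtain C where C: "C \<subseteq> down_set S le x" "is_chain le C" "height S le x = card C - 1"
    using height_attained[OF assms(1)] by blast
  have fin: "finite (down_set S le y)" using assms(1) by (simp add: down_set_def)
  note po = po_parts[OF assms(2)]
  let ?C = "insert y (insert x C)"
  have Cd: "\<And>c. c \<in> C \<Longrightarrow> c \<in> S \<and> le c x" using C(1) unfolding down_set_def by blast
  have Cy: "\<And>c. c \<in> C \<Longrightarrow> le c y"
  proof -
    fix c assume "c \<in> C"
    hence "c \<in> S" "le c x" using Cd by auto
    thus "le c y" using po(3) assms(3,4,5) by blast
  qed
  have sub: "?C \<subseteq> down_set S le y"
  proof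
    fix c assume "c \<in> ?C"
    moreover have "y \<in> down_set S le y" using po(1) assms(4) by (simp add: down_set_def)
    moreover have "x \<in> down_set S le y" using assms(3,5) by (simp add: down_set_def)
    moreover have "c \<in> C \<Longrightarrow> c \<in> down_set S le y" using Cd Cy by (simp add: down_set_def)
    ultimately show "c \<in> down_set S le y" by blast
  qed
  have ch: "is_chain le ?C"
    unfolding is_chain_def
  proof (intro ballI)
    fix a b assume a: "a \<in> ?C" and b: "b \<in> ?C"
    have cc: "\<And>a b. a \<in> C \<Longrightarrow> b \<in> C \<Longrightarrow> le a b \<or> le b a" using C(2) unfolding is_chain_def by blast
    have rx: "le x x" "le y y" using po(1) assms(3,4) by auto
    show "le a b \<or> le b a"
      using a b cc rx Cd Cy assms(5) by auto
  qed
  have yn: "y \<notin> insert x C"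
  proof
    assume "y \<in> insert x C"
    moreover have "y \<notin> C"
    proof
      assume "y \<in> C"
      hence "le y x" using Cd by blast
      hence "x = y" using po(2) assms(3,4,5) by blast
      thus False using assms(6) by simp
    qed
    ultimately show False using assms(6) by simp
  qed
  have "finite (down_set S le x)" using assms(1) by (simp add: down_set_def)
  hence finC: "finite (insert x C)" using finite_subset[OF C(1)] by simp
  have "card ?C - 1 \<le> height S le y" using height_ge[OF assms(1) sub ch] .
  moreover have "card ?C = Suc (card (insert x C))" using yn finC by simp
  moreover have "card C \<le> card (insert x C)" using finC by (simp add: card_mono subset_insertI)
  moreover have "card (insert x C) > 0" using finC by (simp add: card_gt_0_iff)
  ultimately show ?thesis using C(3) by linarith
qed

lemma height_chain:
  assumes "finite S" "is_chain le (down_set S le x)"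
  shows "height S le x = card (down_set S le x) - 1"
proof (rule antisym)
  show "height S le x \<le> card (down_set S le x) - 1"
    apply (rule height_le[OF assms(1)])
    using assms(1) by (simp add: card_mono diff_le_mono down_set_def)
  show "card (down_set S le x) - 1 \<le> height S le x"
    using height_ge[OF assms(1) _ assms(2)] by simp
qed

lemma exists_top:
  assumes "finite S" "partial_order_on' S le" "x \<in> S"
  shows "\<exists>t\<in>Top S le. le x t"
proof -
  let ?A = "up_set S le x"
  have Aa: "x \<in> ?A" using po_parts(1)[OF assms(2)] assms(3) unfolding up_set_def by blast
  have fA: "finite ?A" using assms(1) by (simp add: up_set_def)
  let ?m = "Max (height S le ` ?A)"
  have "?m \<in> height S le ` ?A" using fA Aa by (intro Max_in) auto
  then obtain t where t: "t \<in> ?A" "height S le t = ?m" by auto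
  have "t \<in> Top S le"
  proof -
    { fix y assume y: "y \<in> S" "le t y" "y \<noteq> t"
      have tx: "t \<in> S" "le x t" using t(1) unfolding up_set_def by auto
      have "le x y" using po_parts(3)[OF assms(2)] tx y assms(3) by blast
      hence "y \<in> ?A" using y unfolding up_set_def by blast
      hence "height S le y \<le> ?m" using fA by auto
      moreover have "height S le t < height S le y"
      proof -
        have tS: "t \<in> S" using t(1) by (simp add: up_set_def)
        have ty: "t \<noteq> y" using y(3) by simp
        show ?thesis using height_mono[OF assms(1,2) tS y(1) y(2) ty] .
      qed
      ultimately have False using t by simp }
    thus ?thesis using t unfolding Top_def up_set_def by auto
  qed
  thus ?thesis using t unfolding up_set_def by auto
qed

lemma seg_point:
  assumes "z \<in> closed_segment ((p::real),(n::real)) (q,m)"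
  shows "\<exists>u. 0 \<le> u \<and> u \<le> 1 \<and> fst z = (1-u)*p+u*q \<and> snd z = (1-u)*n + u*m"
  using assms unfolding in_segment by auto

lemma seg_same:
  fixes p1 q1 p2 q2 n :: real
  assumes "z \<in> closed_segment (p1,n) (q1,n+1)" "z \<in> closed_segment (p2,n) (q2,n+1)"
  shows "(p1 < p2 \<and> q1 < q2 \<longrightarrow> False) \<and> (p1 = p2 \<longrightarrow> q1 \<noteq> q2 \<longrightarrow> z = (p1,n))
     \<and> (q1 = q2 \<longrightarrow> p1 \<noteq> p2 \<longrightarrow> z = (q1,n+1))"
proof -
  obtain u where u: "0 \<le> u" "u \<le> 1" "fst z = (1-u)*p1+u*q1" "snd z = (1-u)*n + u*(n+1)"
    using seg_point[OF assms(1)] by blast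
  obtain w where w: "0 \<le> w" "w \<le> 1" "fst z = (1-w)*p2+w*q2" "snd z = (1-w)*n + w*(n+1)"
    using seg_point[OF assms(2)] by blast
  have uw: "u = w" using u(4) w(4) by (simp add: algebra_simps)
  have eq: "(1-u)*(p2-p1) + u*(q2-q1) = 0" using u(3) w(3) uw by (simp add: algebra_simps)
  have A: "p1 < p2 \<and> q1 < q2 \<longrightarrow> False"
  proof
    assume h: "p1 < p2 \<and> q1 < q2"
    have "(1-u)*(p2-p1) \<ge> 0" "u*(q2-q1) \<ge> 0" using h u by auto
    hence "(1-u)*(p2-p1) = 0" "u*(q2-q1) = 0" using eq by linarith+
    thus False using h by auto
  qed
  have B: "p1 = p2 \<longrightarrow> q1 \<noteq> q2 \<longrightarrow> z = (p1,n)"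
  proof (intro impI)
    assume "p1 = p2" "q1 \<noteq> q2"
    hence "u = 0" using eq by auto
    thus "z = (p1,n)" using u by (simp add: prod_eq_iff)
  qed
  have C: "q1 = q2 \<longrightarrow> p1 \<noteq> p2 \<longrightarrow> z = (q1,n+1)"
  proof (intro impI)
    assume "q1 = q2" "p1 \<noteq> p2"
    hence "u = 1" using eq by auto
    thus "z = (q1,n+1)" using u by (simp add: prod_eq_iff)
  qed
  show ?thesis using A B C by blast
qed

lemma seg_diff:
  fixes p1 q1 p2 q2 n m :: real
  assumes "z \<in> closed_segment (p1,n) (q1,n+1)" "z \<in> closed_segment (p2,m) (q2,m+1)" "n + 1 \<le> m"
  shows "z = (q1,n+1) \<and> z = (p2,m)"
proof -
  obtain u where u: "0 \<le> u" "u \<le> 1" "fst z = (1-u)*p1+u*q1" "snd z = (1-u)*n + u*(n+1)"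
    using seg_point[OF assms(1)] by blast
  obtain w where w: "0 \<le> w" "w \<le> 1" "fst z = (1-w)*p2+w*q2" "snd z = (1-w)*m + w*(m+1)"
    using seg_point[OF assms(2)] by blast
  have e1: "(1-u)*n + u*(n+1) = n + u" "(1-w)*m + w*(m+1) = m + w" by (simp_all add: algebra_simps)
  have "snd z = n + u" using u(4) e1 by simp
  moreover have "snd z = m + w" using w(4) e1 by simp
  ultimately have nm: "n + u = m + w" by simp
  have "u = 1" using nm u w assms(3) by linarith
  moreover have "w = 0" using nm u w assms(3) by linarith
  moreover have "m = n + 1" using nm u w assms(3) by linarith
  ultimately show ?thesis using u w by (simp add: prod_eq_iff)
qed




lemma drawing_generic:
  fixes f :: "'b \<Rightarrow> real" and h :: "'b \<Rightarrow> nat"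
  assumes mono: "\<And>x y. x\<in>S \<Longrightarrow> y\<in>S \<Longrightarrow> L x y \<Longrightarrow> x \<noteq> y \<Longrightarrow> h x < h y"
  and cov: "\<And>x y. covers S L x y \<Longrightarrow> h y = Suc (h x)"
  and band: "\<And>x y u v. covers S L x y \<Longrightarrow> covers S L u v \<Longrightarrow> h x = h u \<Longrightarrow>
       x = u \<or> y = v \<or> (f x < f u \<and> f y < f v) \<or> (f u < f x \<and> f v < f y)"
  and inj: "\<And>x y. x\<in>S \<Longrightarrow> y\<in>S \<Longrightarrow> h x = h y \<Longrightarrow> f x = f y \<Longrightarrow> x = y"
  shows "plane_drawing S L (\<lambda>z. (f z, real (h z)))"
  unfolding plane_drawing_def
proof (intro conjI)
  let ?d = "\<lambda>z. (f z, real (h z))"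
  show "inj_on ?d S" using inj by (auto simp: inj_on_def)
  show "\<forall>x\<in>S. \<forall>y\<in>S. L x y \<and> x \<noteq> y \<longrightarrow> snd (?d x) < snd (?d y)" using mono by auto
  show "\<forall>x y u v. covers S L x y \<and> covers S L u v \<and> (x, y) \<noteq> (u, v) \<longrightarrow>
     closed_segment (?d x) (?d y) \<inter> closed_segment (?d u) (?d v) \<subseteq> {?d x, ?d y} \<inter> {?d u, ?d v}"
  proof (intro allI impI subsetI)
    fix x y u v z
    assume H: "covers S L x y \<and> covers S L u v \<and> (x, y) \<noteq> (u, v)"
      and z: "z \<in> closed_segment (?d x) (?d y) \<inter> closed_segment (?d u) (?d v)"
    have c1: "covers S L x y" and c2: "covers S L u v" and ne: "(x,y) \<noteq> (u,v)" using H by auto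
    have SS: "x\<in>S" "y\<in>S" "u\<in>S" "v\<in>S" using c1 c2 by (auto simp: covers_def)
    have dy: "?d y = (f y, real (h x) + 1)" using cov[OF c1] by simp
    have dv: "?d v = (f v, real (h u) + 1)" using cov[OF c2] by simp
    have z1: "z \<in> closed_segment (f x, real (h x)) (f y, real (h x) + 1)" using z dy by simp
    have z2: "z \<in> closed_segment (f u, real (h u)) (f v, real (h u) + 1)" using z dv by simp
    consider (eq) "h x = h u" | (lt) "h x < h u" | (gt) "h u < h x" by linarith
    then show "z \<in> {?d x, ?d y} \<inter> {?d u, ?d v}"
    proof cases
      case eq
      hence z2': "z \<in> closed_segment (f u, real (h x)) (f v, real (h x) + 1)" using z2 by simp
      note G1 = seg_same[OF z1 z2'] and G2 = seg_same[OF z2' z1]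
      from band[OF c1 c2 eq] consider (a) "x = u" | (b) "y = v" | (c) "f x < f u \<and> f y < f v"
        | (d) "f u < f x \<and> f v < f y" by blast
      then show ?thesis
      proof cases
        case a
        then have "y \<noteq> v" using ne by auto
        have "h y = h v" using cov c1 c2 a by auto
        hence "f y \<noteq> f v" using inj SS \<open>y\<noteq>v\<close> by blast
        hence "z = ?d x" using G1 a by simp
        thus ?thesis using a by simp
      next
        case b
        then have "x \<noteq> u" using ne by auto
        hence "f x \<noteq> f u" using inj SS eq by blast
        hence "z = (f y, real (h x) + 1)" using G1 b by simp
        thus ?thesis using b dy by simp
      next
        case c thus ?thesis using G1 by blast
      next
        case d thus ?thesis using G2 by blast
      qed
    next
      case lt
      hence "real (h x) + 1 \<le> real (h u)" by simp
      from seg_diff[OF z1 z2 this] have "z = ?d y" "z = ?d u" using dy by auto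
      thus ?thesis by blast
    next
      case gt
      hence "real (h u) + 1 \<le> real (h x)" by simp
      from seg_diff[OF z2 z1 this] have "z = ?d v" "z = ?d x" using dv by auto
      thus ?thesis by blast
    qed
  qed
qed

definition interval_nat :: "nat set \<Rightarrow> bool" where
  "interval_nat A \<longleftrightarrow> (\<forall>a\<in>A. \<forall>b\<in>A. \<forall>m. a \<le> m \<and> m \<le> b \<longrightarrow> m \<in> A)"

lemma min_order:
  assumes "finite A" "finite B" "A \<inter> B = {}" "A' \<noteq> {}" "B' \<noteq> {}" "A' \<subseteq> A" "B' \<subseteq> B"
    "interval_nat A" "Min A < Min B"
  shows "Min A' < Min B'"
proof -
  have ne: "A \<noteq> {}" "B \<noteq> {}" using assms(4,5,6,7) by blast+
  have mb: "Min B \<le> Min B'" using Min_antimono[OF assms(7,5,2)] .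
  have fa: "finite A'" using finite_subset[OF assms(6,1)] .
  have "Min A' \<in> A'" using Min_in[OF fa assms(4)] .
  hence ma': "Min A' \<in> A" using assms(6) by (rule subsetD[rotated])
  have ma: "Min A \<in> A" using Min_in[OF assms(1) ne(1)] .
  have mB: "Min B \<in> B" using Min_in[OF assms(2) ne(2)] .
  have iv: "\<And>a b m. a\<in>A \<Longrightarrow> b\<in>A \<Longrightarrow> a \<le> m \<Longrightarrow> m \<le> b \<Longrightarrow> m\<in>A"
    using assms(8) unfolding interval_nat_def by blast
  have "Min A' < Min B"
  proof (rule ccontr)
    assume "\<not> Min A' < Min B"
    hence le1: "Min B \<le> Min A'" by simp
    have le0: "Min A \<le> Min B" using assms(9) by simp
    have "Min B \<in> A" using iv[OF ma ma' le0 le1] .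
    thus False using mB assms(3) by blast
  qed
  thus ?thesis using mb by linarith
qed




locale sawed =
  fixes T :: "'a set" and le :: "'a \<Rightarrow> 'a \<Rightarrow> bool" and ts :: "'a list"
  assumes A: "is_sawed_tree_basis T le ts"
begin

abbreviation "S \<equiv> sawed_carrier T ts"
abbreviation "L \<equiv> sawed_le le ts"
abbreviation "k \<equiv> length ts"

lemma A1: "finite_tree T le" using A unfolding is_sawed_tree_basis_def by (elim conjE)
lemma A3: "\<forall>t\<in>Top T le. \<forall>t'\<in>Top T le. height T le t = height T le t'"
  using A unfolding is_sawed_tree_basis_def by (elim conjE)
lemma A4: "plane_ordering T le ts" using A unfolding is_sawed_tree_basis_def by (elim conjE)
lemmas A_parts = A1 A1 A3 A4

lemma finT: "finite T" using A_parts(1) unfolding finite_tree_def by (elim conjE)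
lemma poT: "partial_order_on' T le" using A_parts(1) unfolding finite_tree_def by (elim conjE)
lemma chT: "x\<in>T \<Longrightarrow> is_chain le (down_set T le x)"
proof -
  assume x: "x \<in> T"
  have "\<forall>x\<in>T. is_chain le (down_set T le x)" using A_parts(1) unfolding finite_tree_def by (elim conjE)
  thus ?thesis using x by blast
qed
lemma dist: "distinct ts" using A_parts(4) unfolding plane_ordering_def by (elim conjE)
lemma setts: "set ts = Top T le" using A_parts(4) unfolding plane_ordering_def by (elim conjE)
lemma heq: "t\<in>Top T le \<Longrightarrow> t'\<in>Top T le \<Longrightarrow> height T le t = height T le t'"
  using A_parts(3) by blast

lemma Trefl: "x \<in> T \<Longrightarrow> le x x" using po_refl[OF poT] by blast
lemma Tanti: "x \<in> T \<Longrightarrow> y \<in> T \<Longrightarrow> le x y \<Longrightarrow> le y x \<Longrightarrow> x = y"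
  using po_anti[OF poT] by blast
lemma Ttrans: "x \<in> T \<Longrightarrow> y \<in> T \<Longrightarrow> z \<in> T \<Longrightarrow> le x y \<Longrightarrow> le y z \<Longrightarrow> le x z"
  using po_trans[OF poT] by blast

lemma tsTop: "i < k \<Longrightarrow> ts ! i \<in> Top T le"
proof -
  assume "i < k"
  hence "ts!i \<in> set ts" by (rule nth_mem)
  thus ?thesis using setts by simp
qed

lemma tsT: "i < k \<Longrightarrow> ts ! i \<in> T"
  using tsTop unfolding Top_def by blast

lemma topmax: "i < k \<Longrightarrow> y \<in> T \<Longrightarrow> le (ts!i) y \<Longrightarrow> y = ts!i"
  using tsTop unfolding Top_def by blast

lemma intv: "x\<in>T \<Longrightarrow> i \<le> j \<Longrightarrow> j \<le> l \<Longrightarrow> l < k \<Longrightarrow> le x (ts!i) \<Longrightarrow> le x (ts!l) \<Longrightarrow> le x (ts!j)"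
proof -
  assume h: "x\<in>T" "i \<le> j" "j \<le> l" "l < k" "le x (ts!i)" "le x (ts!l)"
  have all: "\<forall>x\<in>T. \<forall>i j l. i \<le> j \<and> j \<le> l \<and> l < k \<and>
        ts ! i \<in> up_set T le x \<and> ts ! l \<in> up_set T le x \<longrightarrow> ts ! j \<in> up_set T le x"
    using A_parts(4) unfolding plane_ordering_def by (elim conjE)
  hence imp: "i \<le> j \<and> j \<le> l \<and> l < k \<and>
        ts ! i \<in> up_set T le x \<and> ts ! l \<in> up_set T le x \<longrightarrow> ts ! j \<in> up_set T le x"
    using h(1) by blast
  have ik: "i < k" using h by simp
  have "ts ! i \<in> up_set T le x" using tsT[OF ik] h(5) unfolding up_set_def by simp
  moreover have "ts ! l \<in> up_set T le x" using tsT[OF h(4)] h(6) unfolding up_set_def by simp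
  ultimately have "ts ! j \<in> up_set T le x" using imp h by blast
  thus ?thesis unfolding up_set_def by simp
qed

lemma finS: "finite S" using finT by (simp add: sawed_carrier_def)

lemma inS: "Inl x \<in> S \<longleftrightarrow> x \<in> T" "Inr i \<in> S \<longleftrightarrow> i < k - 1"
  by (auto simp: sawed_carrier_def)

lemma S_refl: "a \<in> S \<Longrightarrow> L a a" by (cases a) (simp_all add: inS Trefl)

lemma S_anti: "a \<in> S \<Longrightarrow> b \<in> S \<Longrightarrow> L a b \<Longrightarrow> L b a \<Longrightarrow> a = b"
proof (cases a; cases b)
  fix x y assume "a = Inl x" "b = Inl y" "a \<in> S" "b \<in> S" "L a b" "L b a"
  thus ?thesis using Tanti[of x y] by (simp add: inS)
qed simp_all

lemma S_trans: "a \<in> S \<Longrightarrow> b \<in> S \<Longrightarrow> c \<in> S \<Longrightarrow> L a b \<Longrightarrow> L b c \<Longrightarrow> L a c"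
proof (cases a; cases b; cases c)
  fix x y z assume "a = Inl x" "b = Inl y" "c = Inl z" "a \<in> S" "b \<in> S" "c \<in> S" "L a b" "L b c"
  thus ?thesis using Ttrans[of x y z] by (simp add: inS)
next
  fix x y i assume e: "a = Inl x" "b = Inl y" "c = Inr i" "a \<in> S" "b \<in> S" "c \<in> S" "L a b" "L b c"
  hence "i < k - 1" by (simp add: inS)
  hence "ts!i \<in> T" "ts!Suc i \<in> T" using tsT by auto
  thus ?thesis using e Ttrans[of x y "ts!i"] Ttrans[of x y "ts!Suc i"] by (auto simp: inS)
qed simp_all

lemma poS: "partial_order_on' S L"
  unfolding partial_order_on'_def using S_refl S_anti S_trans by blast

lemma downS_Inl: "x \<in> T \<Longrightarrow> down_set S L (Inl x) = Inl ` down_set T le x"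
  unfolding down_set_def
  apply (rule set_eqI)
  subgoal for z by (cases z) (auto simp: inS)
  done

lemma chain_Inl: "is_chain L (Inl ` D) \<longleftrightarrow> is_chain le D"
  by (auto simp: is_chain_def)

lemma hT: "x \<in> T \<Longrightarrow> height T le x = card (down_set T le x) - 1"
  using height_chain[OF finT chT] by blast

lemma hS_Inl: "x \<in> T \<Longrightarrow> height S L (Inl x) = height T le x"
proof -
  assume x: "x \<in> T"
  have "is_chain L (down_set S L (Inl x))" using downS_Inl[OF x] chT[OF x] chain_Inl by simp
  hence "height S L (Inl x) = card (down_set S L (Inl x)) - 1" using height_chain[OF finS] by blast
  also have "\<dots> = card (down_set T le x) - 1" using downS_Inl[OF x] by (simp add: card_image)
  finally show ?thesis using hT[OF x] by simp
qed

lemma hS_mono: "a \<in> S \<Longrightarrow> b \<in> S \<Longrightarrow> L a b \<Longrightarrow> a \<noteq> b \<Longrightarrow> height S L a < height S L b"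
  using height_mono[OF finS poS] by blast

lemma tops_eqT: "i < k \<Longrightarrow> j < k \<Longrightarrow> height T le (ts!i) = height T le (ts!j)"
proof -
  assume ij: "i<k" "j<k"
  have t: "ts!i \<in> Top T le" "ts!j \<in> Top T le" using nth_mem[OF ij(1)] nth_mem[OF ij(2)] setts by auto
  show ?thesis using heq[OF t] by simp
qed

lemma tops_eq: "i < k \<Longrightarrow> j < k \<Longrightarrow> height S L (Inl (ts!i)) = height S L (Inl (ts!j))"
proof -
  assume ij: "i < k" "j < k"
  have "height S L (Inl (ts!i)) = height T le (ts!i)" using hS_Inl[OF tsT[OF ij(1)]] .
  also have "\<dots> = height T le (ts!j)" using tops_eqT[OF ij] .
  also have "\<dots> = height S L (Inl (ts!j))" using hS_Inl[OF tsT[OF ij(2)]] by simp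
  finally show ?thesis .
qed

lemma card_down_pos: "x \<in> T \<Longrightarrow> card (down_set T le x) \<ge> 1"
proof -
  assume x: "x \<in> T"
  have "x \<in> down_set T le x" using x Trefl by (simp add: down_set_def)
  moreover have "finite (down_set T le x)" using finT by (simp add: down_set_def)
  ultimately have "card (down_set T le x) > 0" by (auto simp: card_gt_0_iff)
  thus ?thesis by simp
qed

lemma card_ins_Inl: "finite D \<Longrightarrow> card (insert (Inr i) (Inl ` D)) = Suc (card D)"
proof -
  assume f: "finite D"
  have n: "Inr i \<notin> Inl ` D" by auto
  have c: "card (Inl ` D) = card D" by (rule card_image) (simp add: inj_on_def)
  show ?thesis using card_insert_disjoint[OF finite_imageI[OF f] n] c by simp
qed

lemma hS_Inr:
  assumes i: "i < k - 1"
  shows "height S L (Inr i) = Suc (height S L (Inl (ts!i)))"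
proof -
  have ik: "i < k" "Suc i < k" using i by auto
  define D where "D = down_set T le (ts!i)"
  define D' where "D' = down_set T le (ts!Suc i)"
  have fD: "finite D" "finite D'" using finT by (auto simp: D_def D'_def down_set_def)
  have "height T le (ts!i) = height T le (ts!Suc i)"
    using tops_eqT[OF ik] .
  hence cD: "card D' = card D" using hT[OF tsT[OF ik(1)]] hT[OF tsT[OF ik(2)]]
     card_down_pos[OF tsT[OF ik(1)]] card_down_pos[OF tsT[OF ik(2)]] unfolding D_def D'_def
    by linarith
  have cpos: "card D \<ge> 1" using card_down_pos tsT ik unfolding D_def by auto
  have "height S L (Inr i) = card D"
  proof (rule antisym)
    show "height S L (Inr i) \<le> card D"
    proof (rule height_le[OF finS])
      fix C assume C: "C \<subseteq> down_set S L (Inr i)" "is_chain L C"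
      have "C \<subseteq> insert (Inr i) (Inl ` D) \<or> C \<subseteq> insert (Inr i) (Inl ` D')"
      proof (rule ccontr)
        assume "\<not> ?thesis"
        then obtain p q where p: "p \<in> C" "p \<notin> insert (Inr i) (Inl ` D)"
          and q: "q \<in> C" "q \<notin> insert (Inr i) (Inl ` D')" by blast
        have pd: "p \<in> down_set S L (Inr i)" "q \<in> down_set S L (Inr i)" using p q C by auto
        obtain a where a: "p = Inl a" "a \<in> T" "\<not> le a (ts!i)" "le a (ts!Suc i)"
          using pd(1) p(2) unfolding down_set_def D_def
          by (cases p) (auto simp: inS)
        obtain b where b: "q = Inl b" "b \<in> T" "\<not> le b (ts!Suc i)" "le b (ts!i)"
          using pd(2) q(2) unfolding down_set_def D'_def
          by (cases q) (auto simp: inS)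
        have "le a b \<or> le b a" using C(2) p(1) q(1) a(1) b(1) unfolding is_chain_def by force
        thus False using a b Ttrans tsT ik by blast
      qed
      moreover have c1: "card (insert (Inr i) (Inl ` D)) = Suc (card D)" using card_ins_Inl[OF fD(1)] .
      moreover have c2: "card (insert (Inr i) (Inl ` D')) = Suc (card D')" using card_ins_Inl[OF fD(2)] .
      moreover have f1: "finite (insert (Inr i) (Inl ` D))" using fD(1) by simp
      moreover have f2: "finite (insert (Inr i) (Inl ` D'))" using fD(2) by simp
      ultimately have "card C \<le> Suc (card D)"
      proof (elim disjE)
        assume "C \<subseteq> insert (Inr i) (Inl ` D)"
        thus ?thesis using card_mono[OF f1] c1 by simp
      next
        assume "C \<subseteq> insert (Inr i) (Inl ` D')"
        thus ?thesis using card_mono[OF f2] c2 cD by simp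
      qed
      thus "card C - 1 \<le> card D" by simp
    qed
  next
    let ?C = "insert (Inr i) (Inl ` D)"
    have sub: "?C \<subseteq> down_set S L (Inr i)"
      using i tsT ik unfolding D_def down_set_def by (auto simp: inS)
    have ch: "is_chain L ?C" using chT[OF tsT[OF ik(1)]] unfolding D_def is_chain_def down_set_def by auto
    have "card ?C = Suc (card D)" using card_ins_Inl[OF fD(1)] .
    thus "card D \<le> height S L (Inr i)" using height_ge[OF finS sub ch] by simp
  qed
  moreover have "height S L (Inl (ts!i)) = card D - 1" using hS_Inl hT tsT ik unfolding D_def by simp
  ultimately show ?thesis using cpos by simp
qed

end



context sawed begin

definition U :: "'a \<Rightarrow> nat set" where "U x = {j. j < k \<and> le x (ts!j)}"

definition f :: "'a + nat \<Rightarrow> real" where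
  "f z = (case z of Inl x \<Rightarrow> real (Min (U x)) | Inr i \<Rightarrow> real i + 1/2)"

lemma U_fin: "finite (U x)" by (simp add: U_def)

lemma U_ne: "x \<in> T \<Longrightarrow> U x \<noteq> {}"
proof -
  assume x: "x \<in> T"
  obtain t where t: "t \<in> Top T le" "le x t" using exists_top[OF finT poT x] by blast
  then obtain j where "j < k" "ts!j = t" using setts by (metis in_set_conv_nth)
  thus ?thesis using t unfolding U_def by auto
qed

lemma U_top: "j < k \<Longrightarrow> U (ts!j) = {j}"
proof -
  assume j: "j < k"
  { fix l assume "l < k" "le (ts!j) (ts!l)"
    hence "ts!l = ts!j" using topmax[OF j tsT] by blast
    hence "l = j" using dist \<open>l<k\<close> j by (simp add: nth_eq_iff_index_eq) }
  thus ?thesis using j Trefl tsT unfolding U_def by auto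
qed

lemma f_top: "j < k \<Longrightarrow> f (Inl (ts!j)) = real j"
  by (simp add: f_def U_top)

lemma U_int: "x \<in> T \<Longrightarrow> interval_nat (U x)"
  unfolding interval_nat_def U_def using intv by auto

lemma U_disj: "x \<in> T \<Longrightarrow> u \<in> T \<Longrightarrow> \<not> le x u \<Longrightarrow> \<not> le u x \<Longrightarrow> U x \<inter> U u = {}"
proof (rule ccontr)
  assume h: "x \<in> T" "u \<in> T" "\<not> le x u" "\<not> le u x" "U x \<inter> U u \<noteq> {}"
  then obtain j where j: "j < k" "le x (ts!j)" "le u (ts!j)" unfolding U_def by auto
  have "x \<in> down_set T le (ts!j)" "u \<in> down_set T le (ts!j)" using j h by (auto simp: down_set_def)
  thus False using chT[OF tsT[OF j(1)]] h unfolding is_chain_def by blast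
qed

lemma U_sub: "x \<in> T \<Longrightarrow> y \<in> T \<Longrightarrow> le x y \<Longrightarrow> U y \<subseteq> U x"
  unfolding U_def using Ttrans tsT by blast

lemma incomp: "x \<in> T \<Longrightarrow> u \<in> T \<Longrightarrow> height S L (Inl x) = height S L (Inl u) \<Longrightarrow> x \<noteq> u
   \<Longrightarrow> \<not> le x u \<and> \<not> le u x"
  using hS_mono[of "Inl x" "Inl u"] hS_mono[of "Inl u" "Inl x"] by (auto simp: inS)

lemma cov_cases:
  assumes c: "covers S L a b"
  shows "(\<exists>x y. a = Inl x \<and> b = Inl y \<and> x\<in>T \<and> y\<in>T \<and> le x y \<and> x\<noteq>y \<and>
            (\<forall>z\<in>T. le x z \<and> le z y \<longrightarrow> z = x \<or> z = y)) \<or>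
         (\<exists>i j. a = Inl (ts!j) \<and> b = Inr i \<and> i < k - 1 \<and> j \<in> {i, Suc i})"
proof -
  have c': "a \<in> S" "b \<in> S" "L a b" "a \<noteq> b" "\<not> (\<exists>z\<in>S. L a z \<and> a \<noteq> z \<and> L z b \<and> z \<noteq> b)"
    using c unfolding covers_def by auto
  show ?thesis
  proof (cases a)
    case (Inr i)
    thus ?thesis using c' by (cases b) auto
  next
    case (Inl x)
    show ?thesis
    proof (cases b)
      case (Inl y)
      have "\<forall>z\<in>T. le x z \<and> le z y \<longrightarrow> z = x \<or> z = y"
      proof (intro ballI impI)
        fix z assume z: "z \<in> T" "le x z \<and> le z y"
        have "Inl z \<in> S" using z by (simp add: inS)
        hence "\<not> (L a (Inl z) \<and> a \<noteq> Inl z \<and> L (Inl z) b \<and> Inl z \<noteq> b)" using c'(5) by blast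
        thus "z = x \<or> z = y" using z \<open>a = Inl x\<close> Inl by auto
      qed
      thus ?thesis using c' \<open>a = Inl x\<close> Inl by (auto simp: inS)
    next
      case (Inr i)
      have i: "i < k - 1" using c' Inr by (simp add: inS)
      hence tt: "ts!i \<in> T" "ts!Suc i \<in> T" using tsT by auto
      have x: "x \<in> T" using c' \<open>a = Inl x\<close> by (simp add: inS)
      have "le x (ts!i) \<or> le x (ts!Suc i)" using c' \<open>a = Inl x\<close> Inr by simp
      moreover
      { assume "le x (ts!i)" "x \<noteq> ts!i"
        hence False using c'(5) \<open>a = Inl x\<close> Inr tt Trefl by (force simp: inS) }
      moreover
      { assume "le x (ts!Suc i)" "x \<noteq> ts!Suc i"
        hence False using c'(5) \<open>a = Inl x\<close> Inr tt Trefl by (force simp: inS) }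
      ultimately have "x = ts!i \<or> x = ts!Suc i" by blast
      hence "x \<in> {ts!i, ts!Suc i}" by simp
      thus ?thesis using \<open>a = Inl x\<close> Inr i by auto
    qed
  qed
qed

lemma notop_less:
  assumes "x \<in> T" "y \<in> T" "le x y" "x \<noteq> y" "j < k"
  shows "height S L (Inl x) < height S L (Inl (ts!j))"
proof -
  obtain t where t: "t \<in> Top T le" "le y t" using exists_top[OF finT poT assms(2)] by blast
  then obtain l where l: "l < k" "ts!l = t" using setts by (metis in_set_conv_nth)
  have tT: "t \<in> T" using t unfolding Top_def by auto
  have "height S L (Inl x) < height S L (Inl y)" using hS_mono[of "Inl x" "Inl y"] assms by (simp add: inS)
  moreover have "height S L (Inl y) \<le> height S L (Inl t)"
    using hS_mono[of "Inl y" "Inl t"] assms t tT by (cases "y = t") (auto simp: inS)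
  moreover have "height S L (Inl t) = height S L (Inl (ts!j))" using tops_eq[OF l(1) assms(5)] l by simp
  ultimately show ?thesis by simp
qed

lemma cov_height:
  assumes c: "covers S L a b"
  shows "height S L b = Suc (height S L a)"
  using cov_cases[OF c]
proof (elim disjE exE conjE)
  fix x y assume e: "a = Inl x" "b = Inl y" "x \<in> T" "y \<in> T" "le x y" "x \<noteq> y"
     and btw: "\<forall>z\<in>T. le x z \<and> le z y \<longrightarrow> z = x \<or> z = y"
  have "down_set T le y = insert y (down_set T le x)"
  proof (rule set_eqI)
    fix z show "z \<in> down_set T le y \<longleftrightarrow> z \<in> insert y (down_set T le x)"
    proof
      assume z: "z \<in> down_set T le y"
      have "x \<in> down_set T le y" using e by (simp add: down_set_def)
      hence "le z x \<or> le x z" using chT[OF e(4)] z unfolding is_chain_def by blast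
      thus "z \<in> insert y (down_set T le x)" using z btw unfolding down_set_def by auto
    next
      assume "z \<in> insert y (down_set T le x)"
      thus "z \<in> down_set T le y" using e Trefl Ttrans unfolding down_set_def by blast
    qed
  qed
  moreover have "y \<notin> down_set T le x" using e Tanti by (auto simp: down_set_def)
  moreover have "finite (down_set T le x)" using finT by (simp add: down_set_def)
  ultimately have "card (down_set T le y) = Suc (card (down_set T le x))" by simp
  thus ?thesis using e hS_Inl hT card_down_pos[OF e(3)] by simp
next
  fix i j assume e: "a = Inl (ts!j)" "b = Inr i" "i < k - 1" "j \<in> {i, Suc i}"
  thus ?thesis using hS_Inr[OF e(3)] tops_eq[of i "Suc i"] by auto
qed

lemma band:
  assumes c1: "covers S L a b" and c2: "covers S L a' b'"
    and h: "height S L a = height S L a'"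
  shows "a = a' \<or> b = b' \<or> (f a < f a' \<and> f b < f b') \<or> (f a' < f a \<and> f b' < f b)"
  using cov_cases[OF c1]
proof (elim disjE exE conjE)
  fix x y assume e: "a = Inl x" "b = Inl y" "x \<in> T" "y \<in> T" "le x y" "x \<noteq> y"
  show ?thesis using cov_cases[OF c2]
  proof (elim disjE exE conjE)
    fix u v assume e': "a' = Inl u" "b' = Inl v" "u \<in> T" "v \<in> T" "le u v" "u \<noteq> v"
    show ?thesis
    proof (cases "x = u")
      case True thus ?thesis using e e' by simp
    next
      case False
      have ic: "\<not> le x u \<and> \<not> le u x" using incomp[OF e(3) e'(3)] h e e' False by simp
      have dj: "U x \<inter> U u = {}" using U_disj e(3) e'(3) ic by blast
      have ne: "U x \<noteq> {}" "U u \<noteq> {}" "U y \<noteq> {}" "U v \<noteq> {}" using U_ne e e' by auto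
      have "Min (U x) \<in> U x" "Min (U u) \<in> U u" using ne U_fin Min_in by auto
      hence "Min (U x) \<noteq> Min (U u)" using dj by auto
      hence "Min (U x) < Min (U u) \<or> Min (U u) < Min (U x)" by arith
      thus ?thesis
      proof
        assume lt: "Min (U x) < Min (U u)"
        have "Min (U y) < Min (U v)"
          using min_order[OF U_fin U_fin dj ne(3,4) U_sub[OF e(3,4,5)] U_sub[OF e'(3,4,5)] U_int[OF e(3)] lt] .
        thus ?thesis using lt e e' by (simp add: f_def)
      next
        assume lt: "Min (U u) < Min (U x)"
        have dj': "U u \<inter> U x = {}" using dj by blast
        have "Min (U v) < Min (U y)"
          using min_order[OF U_fin U_fin dj' ne(4,3) U_sub[OF e'(3,4,5)] U_sub[OF e(3,4,5)] U_int[OF e'(3)] lt] .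
        thus ?thesis using lt e e' by (simp add: f_def)
      qed
    qed
  next
    fix i j assume e': "a' = Inl (ts!j)" "b' = Inr i" "i < k - 1" "j \<in> {i, Suc i}"
    have "j < k" using e' by auto
    hence "height S L (Inl x) < height S L (Inl (ts!j))" using notop_less[OF e(3-6)] by blast
    hence False using h e e' by simp
    thus ?thesis by blast
  qed
next
  fix i j assume e: "a = Inl (ts!j)" "b = Inr i" "i < k - 1" "j \<in> {i, Suc i}"
  show ?thesis using cov_cases[OF c2]
  proof (elim disjE exE conjE)
    fix u v assume e': "a' = Inl u" "b' = Inl v" "u \<in> T" "v \<in> T" "le u v" "u \<noteq> v"
    have "j < k" using e by auto
    hence "height S L (Inl u) < height S L (Inl (ts!j))" using notop_less[OF e'(3-6)] by blast
    hence False using h e e' by simp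
    thus ?thesis by blast
  next
    fix i' j' assume e': "a' = Inl (ts!j')" "b' = Inr i'" "i' < k - 1" "j' \<in> {i', Suc i'}"
    have jk: "j < k" "j' < k" using e e' by auto
    have fa: "f a = real j" "f a' = real j'" using f_top jk e e' by auto
    have fb: "f b = real i + 1/2" "f b' = real i' + 1/2" using e e' by (auto simp: f_def)
    consider "i = i'" | "i < i'" | "i' < i" by linarith
    thus ?thesis
    proof cases
      case 1 thus ?thesis using e e' by simp
    next
      case 2
      hence "j = j' \<or> j < j'" using e e' by auto
      thus ?thesis using fa fb e e' 2 by auto
    next
      case 3
      hence "j = j' \<or> j' < j" using e e' by auto
      thus ?thesis using fa fb e e' 3 by auto
    qed
  qed
qed

lemma half_neq: "real (m::nat) \<noteq> real i + 1/2"
proof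
  assume "real m = real i + 1/2"
  hence "real (2*m) = real (2*i+1)" by simp
  hence "2*m = 2*i+1" by linarith
  thus False by presburger
qed

lemma injS:
  assumes "a \<in> S" "a' \<in> S" "height S L a = height S L a'" "f a = f a'"
  shows "a = a'"
proof (cases a; cases a')
  fix x u assume e: "a = Inl x" "a' = Inl u"
  show ?thesis
  proof (rule ccontr)
    assume ne: "a \<noteq> a'"
    have T: "x \<in> T" "u \<in> T" using assms e by (auto simp: inS)
    have ic: "\<not> le x u \<and> \<not> le u x" using incomp[OF T] assms e ne by simp
    have dj: "U x \<inter> U u = {}" using U_disj T ic by blast
    have "Min (U x) \<in> U x" "Min (U u) \<in> U u" using U_ne[OF T(1)] U_ne[OF T(2)] U_fin Min_in by auto
    moreover have "Min (U x) = Min (U u)" using assms(4) e by (simp add: f_def)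
    ultimately show False using dj by auto
  qed
next
  fix x i assume e: "a = Inl x" "a' = Inr i"
  thus ?thesis using assms(4) half_neq by (simp add: f_def)
next
  fix i x assume e: "a = Inr i" "a' = Inl x"
  thus ?thesis using assms(4) half_neq[of _ i] by (simp add: f_def) metis
next
  fix i j assume e: "a = Inr i" "a' = Inr j"
  thus ?thesis using assms(4) by (simp add: f_def)
qed

lemma main:
  "\<exists>d. plane_drawing S L d \<and> (\<forall>x\<in>S. snd (d x) = real (height S L x))"
proof -
  have "plane_drawing S L (\<lambda>z. (f z, real (height S L z)))"
    by (rule drawing_generic[OF hS_mono cov_height band injS])
  thus ?thesis by auto
qed

end

theorem corollary7p6:
  fixes T :: "'a set" and le :: "'a \<Rightarrow> 'a \<Rightarrow> bool" and ts :: "'a list"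
  assumes "is_sawed_tree_basis T le ts"
  shows "\<exists>d. plane_drawing (sawed_carrier T ts) (sawed_le le ts) d \<and>
           (\<forall>x\<in>sawed_carrier T ts.
              snd (d x) = real (height (sawed_carrier T ts) (sawed_le le ts) x))"
proof -
  interpret sawed T le ts by (rule sawed.intro[OF assms])
  show ?thesis using main .
qed


end
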